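(* Let $f:\mathbb{R}^n\to\mathbb{R}$ be differentiable, $\mu$-strongly convex, with $L$-Lipschitz gradient $\nabla f$, and let $x^*$ be its unique minimizer. Let $\mathcal{E}^t$ denote the event $\|\nabla f(x^t)\|_\infty\le\eta$. If $x\in\mathbb{R}^n$ satisfies $\|x-x^*\|_2>\frac{L\alpha\sqrt{n}}{2\mu}$, then the iterate $x^{t+1}$ of Markov gradient descent satisfies $$\mathbb{E}\left[\|x^{t+1}-x^*\|_2^2\,\middle|\,x^t=x,\mathcal{E}^t\right]<\|x-x^*\|_2^2 .$$
   Context: A differentiable $f$ is $\mu$-strongly convex if $\langle\nabla f(x)-\nabla f(y),x-y\rangle\ge\mu\|x-y\|_2^2$ for all $x,y$. Markov gradient descent (MGD) with lattice resolution $\alpha>0$ and normalizer $\eta>0$: start at $x^0\in\alpha\mathbb{Z}^n$; at step $t$, for each coordinate $i$, conditionally on $x^t$, $\Delta^t_i\in\{0,1\}$ is Bernoulli with $\mathbb{P}[\Delta^t_i=1\mid x^t]=\min(|\partial_i f(x^t)|/\eta,1)$, and $x^{t+1}_i=x^t_i-\alpha\,\mathrm{sgn}(\partial_i f(x^t))\Delta^t_i$. *)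

theory Defs
  imports "HOL-Analysis.Analysis" "HOL-Probability.Probability"
begin

text \<open>The random increments Delta_i are independent Bernoulli
  variables with success probability min(|partial_i f(x)|/eta, 1); the result is the
  (conditional) law of the next iterate.\<close>

definition mgd_step ::
  "(real^'n \<Rightarrow> real^'n) \<Rightarrow> real \<Rightarrow> real \<Rightarrow> real^'n \<Rightarrow> (real^'n) pmf" where
  "mgd_step grad \<alpha> \<eta> x =
     map_pmf (\<lambda>\<Delta>. \<chi> i. x$i - \<alpha> * sgn (grad x $ i) * (if \<Delta> i then 1 else 0))
       (Pi_pmf UNIV False (\<lambda>i. bernoulli_pmf (min (\<bar>grad x $ i\<bar> / \<eta>) 1)))"

end

theory Submission
  imports Defs
begin

lemma sum_abs_le_sqrt_card_norm:
  fixes g :: "real^'n"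
  shows "(\<Sum>i\<in>UNIV. \<bar>g$i\<bar>) \<le> sqrt (real CARD('n)) * norm g"
proof -
  define s :: "real^'n" where "s = (\<chi> i. sgn (g$i))"
  have "(\<Sum>i\<in>UNIV. \<bar>g$i\<bar>) = inner g s"
    unfolding s_def inner_vec_def by (intro sum.cong refl) (simp add: sgn_if abs_if)
  also have "\<dots> \<le> norm g * norm s" by (rule norm_cauchy_schwarz)
  also have "norm s \<le> sqrt (real CARD('n))"
  proof -
    have "(norm s)^2 = (\<Sum>i\<in>UNIV. (sgn (g$i))^2)"
      unfolding power2_norm_eq_inner inner_vec_def s_def by (simp add: power2_eq_square)
    also have "\<dots> \<le> (\<Sum>i\<in>(UNIV::'n set). (1::real))"
      by (rule sum_mono) (simp add: sgn_if)
    finally have "(norm s)^2 \<le> real CARD('n)" by simp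
    thus ?thesis using real_le_rsqrt by blast
  qed
  hence "norm g * norm s \<le> norm g * sqrt (real CARD('n))"
    by (simp add: mult_left_mono)
  finally show ?thesis by (simp add: mult.commute)
qed

theorem corollary6p5:
  fixes f :: "real^'n \<Rightarrow> real" and grad :: "real^'n \<Rightarrow> real^'n"
    and \<mu> L \<alpha> \<eta> :: real and xs x :: "real^'n"
  assumes grad: "\<And>y. GDERIV f y :> grad y"
    and mu_pos: "\<mu> > 0"
    and strong_convex: "\<And>y z. inner (grad y - grad z) (y - z) \<ge> \<mu> * (norm (y - z))\<^sup>2"
    and lipschitz: "L-lipschitz_on UNIV grad"
    and minimizer: "\<And>y. f xs \<le> f y"
    and alpha_pos: "\<alpha> > 0" and eta_pos: "\<eta> > 0"
    and event: "infnorm (grad x) \<le> \<eta>"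
    and far: "norm (x - xs) > L * \<alpha> * sqrt (real CARD('n)) / (2 * \<mu>)"
  shows "measure_pmf.expectation (mgd_step grad \<alpha> \<eta> x) (\<lambda>y. (norm (y - xs))\<^sup>2)
           < (norm (x - xs))\<^sup>2"
proof -
  define g where "g = grad x"
  define d where "d = x - xs"
  have g0: "grad xs = 0"
  proof -
    have "(f has_derivative (\<lambda>h. inner h (grad xs))) (at xs)"
      using grad[of xs] by (simp add: gderiv_def)
    hence "(\<lambda>h. inner h (grad xs)) = (\<lambda>h. 0)"
      by (rule has_derivative_local_min) (simp add: minimizer)
    hence "inner (grad xs) (grad xs) = 0" by metis
    thus ?thesis by simp
  qed
  have L0: "0 \<le> L" using lipschitz by (rule lipschitz_on_nonneg)
  have gle: "norm g \<le> L * norm d"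
    using lipschitz_onD[OF lipschitz, of x xs] g0 by (simp add: g_def d_def dist_norm)
  have sc: "inner g d \<ge> \<mu> * (norm d)^2"
    using strong_convex[of x xs] g0 by (simp add: g_def d_def)
  have rhs0: "0 \<le> L * \<alpha> * sqrt (real CARD('n)) / (2 * \<mu>)"
    using L0 alpha_pos mu_pos by simp
  have dpos: "norm d > 0" using far rhs0 unfolding d_def by linarith
  have key: "\<alpha> * (\<Sum>i\<in>UNIV. \<bar>g$i\<bar>) < 2 * inner g d"
  proof -
    have "\<alpha> * (\<Sum>i\<in>UNIV. \<bar>g$i\<bar>) \<le> \<alpha> * (sqrt (real CARD('n)) * (L * norm d))"
      using sum_abs_le_sqrt_card_norm[of g] gle alpha_pos
      by (smt (verit, best) mult_left_mono real_sqrt_ge_zero of_nat_0_le_iff)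
    also have "\<dots> = (L * \<alpha> * sqrt (real CARD('n)) / (2 * \<mu>)) * (2 * \<mu>) * norm d"
      using mu_pos by (simp add: field_simps)
    also have "\<dots> < norm d * (2 * \<mu>) * norm d"
    proof -
      have "(L * \<alpha> * sqrt (real CARD('n)) / (2 * \<mu>)) * (2 * \<mu>) < norm d * (2 * \<mu>)"
        using far mu_pos by (intro mult_strict_right_mono) (simp_all add: d_def)
      thus ?thesis using dpos by (rule mult_strict_right_mono)
    qed
    also have "\<dots> = 2 * (\<mu> * (norm d)^2)" by (simp add: power2_eq_square)
    also have "\<dots> \<le> 2 * inner g d" using sc by simp
    finally show ?thesis .
  qed
  define q where "q i = min (\<bar>g$i\<bar> / \<eta>) 1" for i
  have q_eq: "q i = \<bar>g$i\<bar> / \<eta>" for i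
  proof -
    have "\<bar>g$i\<bar> \<le> \<eta>" using event component_le_infnorm_cart[of g i] by (simp add: g_def)
    thus ?thesis using eta_pos by (simp add: q_def)
  qed
  define P where "P = Pi_pmf (UNIV::'n set) False (\<lambda>i. bernoulli_pmf (q i))"
  define h where "h i b = (d$i - \<alpha> * sgn (g$i) * (if b then 1 else 0))^2" for i b
  have fin: "finite (set_pmf P)" by (rule finite_subset[of _ UNIV]) auto
  have "measure_pmf.expectation (mgd_step grad \<alpha> \<eta> x) (\<lambda>y. (norm (y - xs))\<^sup>2)
      = measure_pmf.expectation P (\<lambda>\<Delta>. \<Sum>i\<in>UNIV. h i (\<Delta> i))"
    unfolding mgd_step_def P_def q_def[abs_def] integral_map_pmf g_def
  proof (rule Bochner_Integration.integral_cong[OF refl])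
    fix \<Delta> :: "'n \<Rightarrow> bool"
    have "(norm ((\<chi> i. x$i - \<alpha> * sgn (grad x $ i) * (if \<Delta> i then 1 else 0)) - xs))\<^sup>2
        = (\<Sum>i\<in>UNIV. (x$i - \<alpha> * sgn (grad x $ i) * (if \<Delta> i then 1 else 0) - xs$i)^2)"
      unfolding power2_norm_eq_inner inner_vec_def by (simp add: power2_eq_square)
    also have "\<dots> = (\<Sum>i\<in>UNIV. h i (\<Delta> i))"
      by (intro sum.cong refl) (simp add: h_def d_def g_def algebra_simps)
    finally show "(norm ((\<chi> i. x$i - \<alpha> * sgn (grad x $ i) * (if \<Delta> i then 1 else 0)) - xs))\<^sup>2
        = (\<Sum>i\<in>UNIV. h i (\<Delta> i))" .
  qed
  also have "\<dots> = (\<Sum>i\<in>UNIV. measure_pmf.expectation P (\<lambda>\<Delta>. h i (\<Delta> i)))"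
    by (rule Bochner_Integration.integral_sum) (simp add: integrable_measure_pmf_finite[OF fin])
  also have "\<dots> = (\<Sum>i\<in>UNIV. measure_pmf.expectation (bernoulli_pmf (q i)) (h i))"
  proof (rule sum.cong[OF refl])
    fix i
    have "measure_pmf.expectation P (\<lambda>\<Delta>. h i (\<Delta> i))
        = measure_pmf.expectation (map_pmf (\<lambda>\<Delta>. \<Delta> i) P) (h i)" by simp
    also have "map_pmf (\<lambda>\<Delta>. \<Delta> i) P = bernoulli_pmf (q i)"
      unfolding P_def by (subst Pi_pmf_component) auto
    finally show "measure_pmf.expectation P (\<lambda>\<Delta>. h i (\<Delta> i))
        = measure_pmf.expectation (bernoulli_pmf (q i)) (h i)" .
  qed
  also have "\<dots> = (\<Sum>i\<in>UNIV. (d$i)^2 - (\<alpha> / \<eta>) * (2 * g$i * d$i - \<alpha> * \<bar>g$i\<bar>))"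
  proof (rule sum.cong[OF refl])
    fix i
    have q01: "0 \<le> q i" "q i \<le> 1" using eta_pos by (auto simp: q_def)
    show "measure_pmf.expectation (bernoulli_pmf (q i)) (h i)
        = (d$i)^2 - (\<alpha> / \<eta>) * (2 * g$i * d$i - \<alpha> * \<bar>g$i\<bar>)"
      using q01 eta_pos unfolding q_eq
      by (simp add: h_def q_eq power2_eq_square sgn_if abs_if field_simps)
  qed
  also have "\<dots> = (norm d)^2 - (\<alpha> / \<eta>) * (2 * inner g d - \<alpha> * (\<Sum>i\<in>UNIV. \<bar>g$i\<bar>))"
  proof -
    have nd: "(norm d)^2 = (\<Sum>i\<in>UNIV. (d$i)^2)"
      unfolding power2_norm_eq_inner inner_vec_def by (simp add: power2_eq_square)
    show ?thesis unfolding nd inner_vec_def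
      by (simp add: sum_subtractf sum.distrib sum_distrib_left algebra_simps)
  qed
  also have "\<dots> < (norm d)^2"
  proof -
    have "0 < (\<alpha> / \<eta>) * (2 * inner g d - \<alpha> * (\<Sum>i\<in>UNIV. \<bar>g$i\<bar>))"
      using key alpha_pos eta_pos by (intro mult_pos_pos) simp_all
    thus ?thesis by linarith
  qed
  finally show ?thesis by (simp add: d_def)
qed

end
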